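(* For every $L\le n^2$, let $N(L)$ be the number of distinct $n$-operators $f:\{0,1\}^n\to\{0,1\}^n$ computable by a circuit with at most $L$ wires. Then $$\log_2 N(L)\le 2n^2\,4^{L/n}+n\,2^{n-1}+O(n^2\log_2 n),$$ where the constant in the $O(\cdot)$ term is absolute.
   Context: An $n$-operator is a map $f=(f_1,\dots,f_n):\{0,1\}^n\to\{0,1\}^n$. A (general) circuit is a directed acyclic graph with $n$ input nodes $x_1,\dots,x_n$ (of fanin $0$) and $n$ designated output nodes $y_1,\dots,y_n$. Each non-input node may compute an arbitrary boolean function of the values at its in-neighbours, and there is no restriction on fanin or fanout. The circuit computes $f$ if, for every $i$, the function computed at $y_i$ is $f_i$. The number of wires of a circuit is its number of edges. *)

theory Defs
  imports Complex_Main
begin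

text \<open>Nodes are numbered 0,1,...,n+m-1 where
  nodes 0..n-1 are the inputs x_1..x_n and nodes n..n+m-1 are the non-input nodes
  (gates), listed in a topological order (every DAG admits one).  preds v is the
  list of in-neighbours of gate v (distinct, each smaller than v, so the graph is
  acyclic); gfun v is the arbitrary boolean function computed at v from the values
  of its in-neighbours; outs i is the node designated as output y_(i+1).\<close>

record circuit =
  ngates :: nat
  preds :: "nat \<Rightarrow> nat list"
  gfun :: "nat \<Rightarrow> bool list \<Rightarrow> bool"
  outs :: "nat \<Rightarrow> nat"

definition wf_circuit :: "nat \<Rightarrow> circuit \<Rightarrow> bool" where
  "wf_circuit n C \<longleftrightarrow>
     (\<forall>v. n \<le> v \<and> v < n + ngates C \<longrightarrow>
          distinct (preds C v) \<and> (\<forall>u\<in>set (preds C v). u < v)) \<and>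
     (\<forall>i<n. outs C i < n + ngates C)"

definition wires :: "nat \<Rightarrow> circuit \<Rightarrow> nat" where
  "wires n C = (\<Sum>v\<in>{n..<n + ngates C}. length (preds C v))"

fun node_val :: "nat \<Rightarrow> circuit \<Rightarrow> bool list \<Rightarrow> nat \<Rightarrow> bool" where
  "node_val n C xs v =
     (if v < n then xs ! v
      else gfun C v (map (node_val n C xs) (filter (\<lambda>u. u < v) (preds C v))))"

text \<open>The n-operator {0,1}^n -> {0,1}^n computed by C (inputs/outputs as bool lists of
  length n; the function is fixed to [] outside its domain so that equality of
  operators is equality on {0,1}^n).\<close>
definition computed_op :: "nat \<Rightarrow> circuit \<Rightarrow> bool list \<Rightarrow> bool list" where
  "computed_op n C = (\<lambda>xs. if length xs = n
        then map (\<lambda>i. node_val n C xs (outs C i)) [0..<n] else [])"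

definition N_ops :: "nat \<Rightarrow> nat \<Rightarrow> nat" where
  "N_ops n L = card {computed_op n C | C. wf_circuit n C \<and> wires n C \<le> L}"

end

theory Submission imports Defs begin

definition Dk :: "nat \<Rightarrow> nat \<Rightarrow> nat \<Rightarrow> (nat list \<times> bool list) set" where
  "Dk n M k = {rs. set rs \<subseteq> {..<M} \<and> length rs = k} \<times> {tb. set tb \<subseteq> UNIV \<and> length tb = 2^(min k n)}"

lemma Dk_finite: "finite (Dk n M k)"
  unfolding Dk_def by (intro finite_cartesian_product finite_lists_length_eq) auto

lemma Dk_card: "card (Dk n M k) = M^k * 2^(2^(min k n))"
proof -
  have a: "card {tb::bool list. set tb \<subseteq> UNIV \<and> length tb = 2^(min k n)} = card (UNIV::bool set)^(2^(min k n))"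
    by (rule card_lists_length_eq) simp
  have b: "card {rs. set rs \<subseteq> {..<M} \<and> length rs = k} = card {..<M} ^ k"
    by (rule card_lists_length_eq) simp
  show ?thesis unfolding Dk_def card_cartesian_product a b by simp
qed

lemma pow_ratio:
  assumes "(1::nat) \<le> j" "j \<le> n"
  shows "real n * 2^j \<le> real j * 2^n"
  using assms(2)
proof (induction n rule: dec_induct)
  case base then show ?case by simp
next
  case (step m)
  have "real (Suc m) * 2^j \<le> 2 * real m * 2^j" using step assms by auto
  also have "\<dots> \<le> 2 * (real j * 2^m)" using step by auto
  finally show ?case by simp
qed

lemma pow_min_le:
  assumes "n \<ge> 1" "k \<ge> 1"
  shows "real (2^(min k n)) \<le> real k * (2^n / real n)"
proof (cases "k \<le> n")
  case True
  from pow_ratio[of k n] True assms show ?thesis by (simp add: field_simps min_def)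
next
  case False
  then have "real (2^(min k n)) = 2^n" by (simp add: min_def)
  moreover have "(2::real)^n \<le> real k * (2^n / real n)"
    using False assms by (simp add: field_simps)
  ultimately show ?thesis by simp
qed

lemma Dk_card_le:
  assumes "n \<ge> 1" "k \<ge> 1" "M \<ge> 1"
  shows "real (card (Dk n M k)) \<le> (real M * 2 powr (2^n / real n))^k"
proof -
  have "real (card (Dk n M k)) = real M ^ k * 2 powr (real (2^(min k n)))"
  proof -
    have e: "(2::real) powr (real (2^(min k n))) = 2^(2^(min k n))" by (rule powr_realpow) simp
    show ?thesis unfolding Dk_card e by simp
  qed
  also have "\<dots> \<le> real M ^ k * 2 powr (real k * (2^n / real n))"
    using pow_min_le[OF assms(1,2)] by (intro mult_left_mono powr_mono) auto
  also have "\<dots> = (real M * 2 powr (2^n / real n))^k"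
  proof -
    have "(2::real) powr (real k * (2^n / real n)) = (2 powr (2^n / real n))^k"
      by (subst powr_realpow[symmetric]) (auto simp: powr_powr mult.commute)
    then show ?thesis by (simp add: power_mult_distrib)
  qed
  finally show ?thesis .
qed

definition GL :: "nat \<Rightarrow> nat \<Rightarrow> nat \<Rightarrow> nat \<Rightarrow> (nat list \<times> bool list) list set" where
  "GL n M m w = {gs. length gs = m \<and> (\<forall>g\<in>set gs. length (fst g) \<ge> 1 \<and> g \<in> Dk n M (length (fst g)))
      \<and> sum_list (map (length \<circ> fst) gs) \<le> w}"

lemma GL_bound:
  assumes "n \<ge> 1" "M \<ge> 1"
  shows "finite (GL n M m w) \<and> real (card (GL n M m w)) \<le> (real w + 1)^m * (real M * 2 powr (2^n / real n))^w"
proof (induction m arbitrary: w)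
  case 0
  have "GL n M 0 w = {[]}" unfolding GL_def by auto
  moreover have "1 \<le> real M * 2 powr (2^n / real n)"
  proof -
    have "1 \<le> (2::real) powr (2^n / real n)" by (rule ge_one_powr_ge_zero) auto
    then show ?thesis using assms
      by (metis mult_mono' mult_1 of_nat_1 of_nat_le_iff zero_le_one)
  qed
  ultimately show ?case by simp
next
  case (Suc m)
  define X where "X = real M * 2 powr (2^n / real n)"
  have X1: "X \<ge> 0" unfolding X_def by simp
  have sub: "GL n M (Suc m) w \<subseteq> (\<Union>k\<in>{1..w}. \<Union>d\<in>Dk n M k. (\<lambda>gs. d # gs) ` GL n M m (w - k))"
  proof
    fix gs assume "gs \<in> GL n M (Suc m) w"
    then obtain d hs where gs: "gs = d # hs" and len: "length hs = m"
      and d1: "length (fst d) \<ge> 1" "d \<in> Dk n M (length (fst d))"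
      and hs: "\<forall>g\<in>set hs. length (fst g) \<ge> 1 \<and> g \<in> Dk n M (length (fst g))"
      and s: "length (fst d) + sum_list (map (length \<circ> fst) hs) \<le> w"
      unfolding GL_def by (cases gs) auto
    have "hs \<in> GL n M m (w - length (fst d))" using len hs s unfolding GL_def by auto
    then show "gs \<in> (\<Union>k\<in>{1..w}. \<Union>d\<in>Dk n M k. (\<lambda>gs. d # gs) ` GL n M m (w - k))"
      using gs d1 s by (intro UN_I[of "length (fst d)"]) auto
  qed
  have fin: "finite (\<Union>k\<in>{1..w}. \<Union>d\<in>Dk n M k. (\<lambda>gs. d # gs) ` GL n M m (w - k))"
    using Suc.IH Dk_finite by auto
  have "real (card (GL n M (Suc m) w)) \<le> real (card (\<Union>k\<in>{1..w}. \<Union>d\<in>Dk n M k. (\<lambda>gs. d # gs) ` GL n M m (w - k)))"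
    by (simp only: of_nat_le_iff) (rule card_mono[OF fin sub])
  also have "\<dots> \<le> (\<Sum>k\<in>{1..w}. real (card (\<Union>d\<in>Dk n M k. (\<lambda>gs. d # gs) ` GL n M m (w - k))))"
  proof -
    have "card (\<Union>k\<in>{1..w}. \<Union>d\<in>Dk n M k. (\<lambda>gs. d # gs) ` GL n M m (w - k)) \<le> (\<Sum>k\<in>{1..w}. card (\<Union>d\<in>Dk n M k. (\<lambda>gs. d # gs) ` GL n M m (w - k)))"
      by (rule card_UN_le) simp
    then show ?thesis by (simp only: of_nat_sum[symmetric] of_nat_le_iff)
  qed
  also have "\<dots> \<le> (\<Sum>k\<in>{1..w}. real (card (Dk n M k)) * real (card (GL n M m (w - k))))"
  proof (rule sum_mono)
    fix k assume "k \<in> {1..w}"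
    have "card (\<Union>d\<in>Dk n M k. (\<lambda>gs. d # gs) ` GL n M m (w - k)) \<le> (\<Sum>d\<in>Dk n M k. card ((\<lambda>gs. d # gs) ` GL n M m (w - k)))"
      using card_UN_le[OF Dk_finite] by blast
    also have "\<dots> \<le> (\<Sum>d\<in>Dk n M k. card (GL n M m (w - k)))"
      by (intro sum_mono card_image_le) (use Suc.IH in auto)
    finally show "real (card (\<Union>d\<in>Dk n M k. (\<lambda>gs. d # gs) ` GL n M m (w - k))) \<le> real (card (Dk n M k)) * real (card (GL n M m (w - k)))"
      by (simp flip: of_nat_mult)
  qed
  also have "\<dots> \<le> (\<Sum>k\<in>{1..w}. X^k * ((real w + 1)^m * X^(w-k)))"
  proof (rule sum_mono)
    fix k assume k: "k \<in> {1..w}"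
    have a: "real (card (GL n M m (w - k))) \<le> (real (w - k) + 1)^m * X^(w-k)"
      using Suc.IH unfolding X_def by blast
    have b: "(real (w - k) + 1)^m * X^(w-k) \<le> (real w + 1)^m * X^(w-k)"
      using X1 by (intro mult_right_mono power_mono) auto
    show "real (card (Dk n M k)) * real (card (GL n M m (w - k))) \<le> X^k * ((real w + 1)^m * X^(w-k))"
      using Dk_card_le[OF assms(1) _ assms(2), of k] k a b X1 unfolding X_def
      by (intro mult_mono) auto
  qed
  also have "\<dots> = (\<Sum>k\<in>{1..w}. (real w + 1)^m * X^w)"
    by (intro sum.cong refl) (auto simp: power_add[symmetric])
  also have "\<dots> = real w * ((real w + 1)^m * X^w)" by simp
  also have "\<dots> \<le> (real w + 1)^(Suc m) * X^w"
    using X1 by (simp add: mult_right_mono)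
  finally show ?case using finite_subset[OF sub fin] unfolding X_def by simp
qed


declare node_val.simps[simp del]

definition Rset :: "nat \<Rightarrow> circuit \<Rightarrow> nat set" where
  "Rset n C = {v. n \<le> v \<and> v < n + ngates C \<and> preds C v \<noteq> []}"

definition rk :: "nat \<Rightarrow> circuit \<Rightarrow> nat \<Rightarrow> nat" where
  "rk n C v = card {w \<in> Rset n C. w < v}"

definition refn :: "nat \<Rightarrow> circuit \<Rightarrow> nat \<Rightarrow> nat" where
  "refn n C u = (if u < n then u else if preds C u = [] then n + (if gfun C u [] then 1 else 0)
                 else n + 2 + rk n C u)"

definition tab :: "nat \<Rightarrow> circuit \<Rightarrow> nat \<Rightarrow> bool list" where
  "tab n C v = (if length (preds C v) < n
     then map (gfun C v) (List.n_lists (length (preds C v)) [True, False])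
     else map (\<lambda>xs. node_val n C xs v) (List.n_lists n [True, False]))"

definition enc :: "nat \<Rightarrow> circuit \<Rightarrow> nat list \<times> (nat list \<times> bool list) list" where
  "enc n C = (map (\<lambda>i. refn n C (outs C i)) [0..<n],
              map (\<lambda>v. (map (refn n C) (preds C v), tab n C v)) (sorted_list_of_set (Rset n C)))"

lemma finite_Rset: "finite (Rset n C)"
  unfolding Rset_def by (rule finite_subset[of _ "{..<n + ngates C}"]) auto

lemma card_less_nth:
  fixes xs :: "nat list"
  assumes "sorted_wrt (<) xs" "i < length xs"
  shows "card {w \<in> set xs. w < xs!i} = (i::nat)"
proof -
  have "{w \<in> set xs. w < xs!i} = set (take i xs)"
  proof safe
    fix w assume "w \<in> set xs" "w < xs ! i"
    then obtain j where j: "j < length xs" "w = xs ! j" by (auto simp: in_set_conv_nth)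
    have "j < i"
    proof (rule ccontr)
      assume "\<not> j < i"
      then have "i = j \<or> i < j" by auto
      then have "xs ! i \<le> xs ! j" using sorted_wrt_nth_less[OF assms(1), of i j] j(1) by force
      then show False using \<open>w < xs ! i\<close> j by simp
    qed
    then show "w \<in> set (take i xs)" using j assms(2) by (auto simp: in_set_conv_nth)
  next
    fix w assume "w \<in> set (take i xs)"
    then show "w \<in> set xs" by (meson in_set_takeD)
  next
    fix w assume "w \<in> set (take i xs)"
    then obtain j where j: "j < i" "w = xs ! j" using assms(2) by (auto simp: in_set_conv_nth)
    then show "w < xs ! i" using sorted_wrt_nth_less[OF assms(1) j(1) assms(2)] by simp
  qed
  moreover have "distinct (take i xs)"
    using assms(1) by (simp add: distinct_take strict_sorted_iff)
  ultimately show ?thesis using assms(2) by (simp add: distinct_card)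
qed

lemma rk_nth:
  assumes "u \<in> Rset n C"
  shows "sorted_list_of_set (Rset n C) ! rk n C u = u \<and> rk n C u < card (Rset n C)"
proof -
  let ?xs = "sorted_list_of_set (Rset n C)"
  have s: "sorted_wrt (<) ?xs" by simp
  have st: "set ?xs = Rset n C" using finite_Rset by simp
  obtain i where i: "i < length ?xs" "?xs ! i = u" using assms st by (metis in_set_conv_nth)
  have "rk n C u = i" unfolding rk_def using card_less_nth[OF s i(1)] i st by simp
  then show ?thesis using i finite_Rset by simp
qed

lemma rk_mono:
  assumes "p \<in> Rset n C" "u \<in> Rset n C" "p < u"
  shows "rk n C p < rk n C u"
  unfolding rk_def
  by (rule psubset_card_mono) (use assms finite_Rset in auto)

lemma nv_input: "v < n \<Longrightarrow> node_val n C xs v = xs ! v"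
  by (subst node_val.simps) simp

lemma nv_gate:
  assumes "wf_circuit n C" "n \<le> v" "v < n + ngates C"
  shows "node_val n C xs v = gfun C v (map (node_val n C xs) (preds C v))"
proof -
  have "filter (\<lambda>u. u < v) (preds C v) = preds C v"
    using assms unfolding wf_circuit_def by (auto simp: filter_id_conv)
  then show ?thesis using assms(2) by (subst node_val.simps) simp
qed

lemma refn_lt:
  assumes "u < n + ngates C"
  shows "refn n C u < n + 2 + card (Rset n C)"
proof -
  show ?thesis
  proof (cases "u < n \<or> preds C u = []")
    case True then show ?thesis by (auto simp: refn_def)
  next
    case False
    then have "u \<in> Rset n C" using assms unfolding Rset_def by auto
    then show ?thesis using rk_nth[of u n C] False by (simp add: refn_def)
  qed
qed

lemma refn_pred:
  assumes "wf_circuit n C" "u \<in> Rset n C" "p \<in> set (preds C u)"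
  shows "refn n C p < refn n C u"
proof -
  have u: "n \<le> u" "u < n + ngates C" "preds C u \<noteq> []" using assms(2) unfolding Rset_def by auto
  have pu: "p < u" using assms u unfolding wf_circuit_def by auto
  have ru: "refn n C u = n + 2 + rk n C u" using u unfolding refn_def by auto
  show ?thesis
  proof (cases "p < n \<or> preds C p = []")
    case True then show ?thesis unfolding ru by (auto simp: refn_def)
  next
    case False
    then have "p \<in> Rset n C" using pu u unfolding Rset_def by auto
    then show ?thesis using rk_mono[OF _ assms(2) pu] False unfolding ru by (simp add: refn_def)
  qed
qed

lemma enc_val:
  assumes wf: "wf_circuit n C" "wf_circuit n C'" and e: "enc n C = enc n C'" and lx: "length xs = n"
  shows "u < n + ngates C \<Longrightarrow> u' < n + ngates C' \<Longrightarrow> refn n C u = refn n C' u'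
     \<Longrightarrow> node_val n C xs u = node_val n C' xs u'"
proof (induction "refn n C u" arbitrary: u u' rule: less_induct)
  case less
  note vu = less.prems(1) and vu' = less.prems(2) and req = less.prems(3)
  show ?case
  proof (cases "u < n")
    case True
    then have "refn n C' u' < n" using req by (simp add: refn_def)
    then have "u' < n" by (auto simp: refn_def split: if_splits)
    then show ?thesis using True req by (simp add: refn_def nv_input)
  next
    case nu: False
    show ?thesis
    proof (cases "preds C u = []")
      case True
      then have r: "refn n C u = n + (if gfun C u [] then 1 else 0)" using nu by (simp add: refn_def)
      have nu': "\<not> u' < n" using req r by (auto simp: refn_def)
      have pu': "preds C' u' = []"
      proof (rule ccontr)
        assume "preds C' u' \<noteq> []" then have "refn n C' u' \<ge> n + 2" using nu' by (simp add: refn_def)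
        then show False using req r by (simp split: if_splits)
      qed
      have "gfun C u [] = gfun C' u' []" using req r nu' pu' by (auto simp: refn_def split: if_splits)
      then show ?thesis using nv_gate[OF wf(1) _ vu] nv_gate[OF wf(2) _ vu'] nu nu' True pu' by simp
    next
      case pu: False
      have uR: "u \<in> Rset n C" using nu pu vu unfolding Rset_def by auto
      have r: "refn n C u = n + 2 + rk n C u" using nu pu by (simp add: refn_def)
      have nu': "\<not> u' < n" using req r by (auto simp: refn_def)
      have pu': "preds C' u' \<noteq> []" using req r nu' by (auto simp: refn_def split: if_splits)
      have uR': "u' \<in> Rset n C'" using nu' pu' vu' unfolding Rset_def by auto
      have rkq: "rk n C u = rk n C' u'" using req r nu' pu' by (simp add: refn_def)
      define q where "q = rk n C u"
      let ?xs = "sorted_list_of_set (Rset n C)" and ?xs' = "sorted_list_of_set (Rset n C')"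
      have q1: "?xs ! q = u" "q < length ?xs" using rk_nth[OF uR] finite_Rset unfolding q_def by auto
      have q2: "?xs' ! q = u'" "q < length ?xs'" using rk_nth[OF uR'] finite_Rset unfolding q_def rkq by auto
      have me: "map (\<lambda>v. (map (refn n C) (preds C v), tab n C v)) ?xs
              = map (\<lambda>v. (map (refn n C') (preds C' v), tab n C' v)) ?xs'"
        using e unfolding enc_def by simp
      from arg_cong[OF me, of "\<lambda>l. l ! q"] q1 q2
      have pe: "map (refn n C) (preds C u) = map (refn n C') (preds C' u')"
        and te: "tab n C u = tab n C' u'" by auto
      define k where "k = length (preds C u)"
      have k': "length (preds C' u') = k" unfolding k_def using arg_cong[OF pe, of length] by simp
      show ?thesis
      proof (cases "k < n")
        case True
        have te2: "map (gfun C u) (List.n_lists k [True, False]) = map (gfun C' u') (List.n_lists k [True, False])"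
          using te True k' unfolding tab_def k_def by simp
        have args: "map (node_val n C xs) (preds C u) = map (node_val n C' xs) (preds C' u')"
        proof (rule nth_equalityI)
          show "length (map (node_val n C xs) (preds C u)) = length (map (node_val n C' xs) (preds C' u'))"
            using k' k_def by simp
        next
          fix j assume "j < length (map (node_val n C xs) (preds C u))"
          then have j: "j < k" unfolding k_def by simp
          let ?p = "preds C u ! j" and ?p' = "preds C' u' ! j"
          have pin: "?p \<in> set (preds C u)" using j k_def by simp
          have pin': "?p' \<in> set (preds C' u')" using j k' by simp
          have vp: "?p < n + ngates C"
          proof -
            have "n \<le> u \<and> u < n + ngates C \<longrightarrow> distinct (preds C u) \<and> (\<forall>x\<in>set (preds C u). x < u)"
              using wf(1) unfolding wf_circuit_def by blast
            then show ?thesis using pin vu nu by fastforce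
          qed
          have vp': "?p' < n + ngates C'"
          proof -
            have "n \<le> u' \<and> u' < n + ngates C' \<longrightarrow> distinct (preds C' u') \<and> (\<forall>x\<in>set (preds C' u'). x < u')"
              using wf(2) unfolding wf_circuit_def by blast
            then show ?thesis using pin' vu' nu' by fastforce
          qed
          have rp: "refn n C ?p = refn n C' ?p'"
            using arg_cong[OF pe, of "\<lambda>l. l ! j"] j k' k_def by simp
          have "node_val n C xs ?p = node_val n C' xs ?p'"
            using less.hyps[OF refn_pred[OF wf(1) uR pin] vp vp' rp] .
          then show "map (node_val n C xs) (preds C u) ! j = map (node_val n C' xs) (preds C' u') ! j"
            using j k' k_def by simp
        qed
        have bs: "map (node_val n C xs) (preds C u) \<in> set (List.n_lists k [True, False])"
          unfolding set_n_lists k_def by auto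
        have "gfun C u (map (node_val n C xs) (preds C u)) = gfun C' u' (map (node_val n C' xs) (preds C' u'))"
          using te2 bs args by (simp del: map_eq_conv add: map_eq_conv) 
        then show ?thesis using nv_gate[OF wf(1) _ vu] nv_gate[OF wf(2) _ vu'] nu nu' by simp
      next
        case False
        have te2: "map (\<lambda>xs. node_val n C xs u) (List.n_lists n [True, False]) = map (\<lambda>xs. node_val n C' xs u') (List.n_lists n [True, False])"
          using te False k' unfolding tab_def k_def by simp
        have "xs \<in> set (List.n_lists n [True, False])" unfolding set_n_lists using lx by auto
        then show ?thesis using te2 by simp
      qed
    qed
  qed
qed

lemma enc_op:
  assumes "wf_circuit n C" "wf_circuit n C'" "enc n C = enc n C'"
  shows "computed_op n C = computed_op n C'"
proof
  fix xs
  show "computed_op n C xs = computed_op n C' xs"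
  proof (cases "length xs = n")
    case True
    have "\<And>i. i < n \<Longrightarrow> node_val n C xs (outs C i) = node_val n C' xs (outs C' i)"
    proof -
      fix i assume i: "i < n"
      have "refn n C (outs C i) = refn n C' (outs C' i)"
        using arg_cong[OF assms(3), of "\<lambda>e. fst e ! i"] i unfolding enc_def by simp
      then show "node_val n C xs (outs C i) = node_val n C' xs (outs C' i)"
        using enc_val[OF assms True] i assms(1,2) unfolding wf_circuit_def by blast
    qed
    then show ?thesis unfolding computed_op_def using True by simp
  next
    case False then show ?thesis unfolding computed_op_def by simp
  qed
qed


lemma sum_R_le: "(\<Sum>v\<in>Rset n C. length (preds C v)) \<le> wires n C"
  unfolding wires_def by (rule sum_mono2) (auto simp: Rset_def)

lemma card_R_le: "card (Rset n C) \<le> wires n C"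
proof -
  have "card (Rset n C) = (\<Sum>v\<in>Rset n C. 1)" by simp
  also have "\<dots> \<le> (\<Sum>v\<in>Rset n C. length (preds C v))"
    by (rule sum_mono) (auto simp: Rset_def Suc_le_eq)
  finally show ?thesis using sum_R_le[of C n] by linarith
qed

lemma enc_in:
  assumes wf: "wf_circuit n C" and w: "wires n C \<le> L"
  shows "enc n C \<in> {os. set os \<subseteq> {..<n+2+L} \<and> length os = n} \<times> (\<Union>m\<in>{..L}. GL n (n+2+L) m L)"
proof -
  have cR: "card (Rset n C) \<le> L" using card_R_le[of n C] w by simp
  have rl: "refn n C u < n + 2 + L" if "u < n + ngates C" for u
    using refn_lt[OF that] cR by simp
  let ?xs = "sorted_list_of_set (Rset n C)"
  have st: "set ?xs = Rset n C" using finite_Rset by simp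
  have f: "fst (enc n C) \<in> {os. set os \<subseteq> {..<n+2+L} \<and> length os = n}"
    using wf rl unfolding enc_def wf_circuit_def by auto
  have "snd (enc n C) \<in> GL n (n+2+L) (card (Rset n C)) L"
    unfolding GL_def
  proof (intro CollectI conjI ballI)
    show "length (snd (enc n C)) = card (Rset n C)" unfolding enc_def using finite_Rset by simp
  next
    fix g assume "g \<in> set (snd (enc n C))"
    then obtain v where v: "v \<in> Rset n C" and g: "g = (map (refn n C) (preds C v), tab n C v)"
      unfolding enc_def using st by auto
    have vv: "n \<le> v" "v < n + ngates C" "preds C v \<noteq> []" using v unfolding Rset_def by auto
    have pl: "\<forall>p\<in>set (preds C v). p < n + ngates C" using wf vv unfolding wf_circuit_def by fastforce
    show "length (fst g) \<ge> 1" using vv g by (simp add: Suc_le_eq)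
    have tl: "length (tab n C v) = 2 ^ min (length (preds C v)) n"
      unfolding tab_def by (simp add: length_n_lists min_def numeral_2_eq_2)
    show "g \<in> Dk n (n+2+L) (length (fst g))"
      unfolding Dk_def g using pl rl tl by auto
  next
    have "sum_list (map (length \<circ> fst) (snd (enc n C))) = sum_list (map (\<lambda>v. length (preds C v)) ?xs)"
      unfolding enc_def by (simp add: comp_def)
    also have "\<dots> = (\<Sum>v\<in>Rset n C. length (preds C v))"
      by (subst sum_list_distinct_conv_sum_set) (use st in auto)
    finally show "sum_list (map (length \<circ> fst) (snd (enc n C))) \<le> L" using sum_R_le[of C n] w by simp
  qed
  then have "snd (enc n C) \<in> (\<Union>m\<in>{..L}. GL n (n+2+L) m L)" using cR by auto
  with f show ?thesis by (cases "enc n C") auto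
qed

lemma N_bound:
  assumes n1: "n \<ge> 1"
  shows "real (N_ops n L) \<le> real (n+2+L)^n * ((real L + 1)^(L+1) * (real (n+2+L) * 2 powr (2^n / real n))^L)"
proof -
  define M where "M = n + 2 + L"
  define X where "X = real M * 2 powr (2^n / real n)"
  define OS where "OS = {os. set os \<subseteq> {..<M} \<and> length os = n}"
  define U where "U = (\<Union>m\<in>{..L}. GL n M m L)"
  define Cs where "Cs = {C. wf_circuit n C \<and> wires n C \<le> L}"
  have M1: "M \<ge> 1" unfolding M_def by simp
  have finU: "finite U" unfolding U_def using GL_bound[OF n1 M1] by auto
  have finOS: "finite OS" unfolding OS_def by (rule finite_lists_length_eq) simp
  have cOS: "card OS = M^n" unfolding OS_def by (subst card_lists_length_eq) simp_all
  have X0: "X \<ge> 0" unfolding X_def by simp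
  have "real (card U) \<le> (\<Sum>m\<in>{..L}. real (card (GL n M m L)))"
  proof -
    have "card U \<le> (\<Sum>m\<in>{..L}. card (GL n M m L))" unfolding U_def by (rule card_UN_le) simp
    then show ?thesis by (simp only: of_nat_sum[symmetric] of_nat_le_iff)
  qed
  also have "\<dots> \<le> (\<Sum>m\<in>{..L}. (real L + 1)^L * X^L)"
  proof (rule sum_mono)
    fix m assume "m \<in> {..L}"
    then have "(real L + 1)^m \<le> (real L + 1)^L" by (intro power_increasing) auto
    then show "real (card (GL n M m L)) \<le> (real L + 1)^L * X^L"
      using GL_bound[OF n1 M1, of m L] X0 unfolding X_def
      by (meson mult_right_mono order_trans zero_le_power)
  qed
  also have "\<dots> = (real L + 1)^(L+1) * X^L" by simp
  finally have cU: "real (card U) \<le> (real L + 1)^(L+1) * X^L" .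
  have encin: "enc n ` Cs \<subseteq> OS \<times> U"
    using enc_in unfolding Cs_def OS_def U_def M_def by blast
  have finE: "finite (enc n ` Cs)" using finite_subset[OF encin] finOS finU by blast
  define D where "D = (\<lambda>e. computed_op n (SOME C. C \<in> Cs \<and> enc n C = e))"
  have ops: "{computed_op n C | C. wf_circuit n C \<and> wires n C \<le> L} \<subseteq> D ` (enc n ` Cs)"
  proof
    fix f assume "f \<in> {computed_op n C | C. wf_circuit n C \<and> wires n C \<le> L}"
    then obtain C where C: "C \<in> Cs" "f = computed_op n C" unfolding Cs_def by blast
    define C0 where "C0 = (SOME C'. C' \<in> Cs \<and> enc n C' = enc n C)"
    have "C0 \<in> Cs \<and> enc n C0 = enc n C" unfolding C0_def by (rule someI[of _ C]) (use C in simp)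
    then have "computed_op n C0 = computed_op n C" using enc_op C unfolding Cs_def by blast
    then have "f = D (enc n C)" unfolding D_def C0_def using C by simp
    then show "f \<in> D ` (enc n ` Cs)" using C by blast
  qed
  have "N_ops n L \<le> card (D ` (enc n ` Cs))"
    unfolding N_ops_def by (rule card_mono[OF _ ops]) (use finE in simp)
  also have "\<dots> \<le> card (enc n ` Cs)" by (rule card_image_le[OF finE])
  also have "\<dots> \<le> card (OS \<times> U)" by (rule card_mono[OF _ encin]) (use finOS finU in simp)
  also have "\<dots> = M^n * card U" by (simp add: card_cartesian_product cOS)
  finally have "real (N_ops n L) \<le> real M ^ n * real (card U)"
    by (metis of_nat_le_iff of_nat_mult of_nat_power)
  also have "\<dots> \<le> real M ^ n * ((real L + 1)^(L+1) * X^L)"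
    by (rule mult_left_mono[OF cU]) simp
  finally show ?thesis unfolding M_def X_def by simp
qed


lemma N1: "N_ops 1 L \<le> 4"
proof -
  define F where "F = (\<lambda>(a::bool, b::bool). \<lambda>xs::bool list. if length xs = 1 then [if xs!0 then a else b] else [])"
  have sub: "{computed_op 1 C | C. wf_circuit 1 C \<and> wires 1 C \<le> L} \<subseteq> F ` UNIV"
  proof
    fix f assume "f \<in> {computed_op 1 C | C. wf_circuit 1 C \<and> wires 1 C \<le> L}"
    then obtain C where f: "f = computed_op 1 C" by blast
    have "f = F (node_val 1 C [True] (outs C 0), node_val 1 C [False] (outs C 0))"
    proof
      fix xs :: "bool list"
      show "f xs = F (node_val 1 C [True] (outs C 0), node_val 1 C [False] (outs C 0)) xs"
      proof (cases "length xs = 1")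
        case True
        then obtain x where "xs = [x]" by (metis One_nat_def length_0_conv length_Suc_conv)
        then show ?thesis unfolding f F_def computed_op_def by (cases x) auto
      next
        case False then show ?thesis unfolding f F_def computed_op_def by simp
      qed
    qed
    then show "f \<in> F ` UNIV" by blast
  qed
  have "N_ops 1 L \<le> card (F ` UNIV)" unfolding N_ops_def by (rule card_mono[OF _ sub]) simp
  also have "\<dots> \<le> card (UNIV :: (bool \<times> bool) set)" by (rule card_image_le) simp
  also have "\<dots> = 4" by (simp add: card_UNIV_bool flip: UNIV_Times_UNIV)
  finally show ?thesis .
qed

lemma La_bound:
  assumes n1: "n \<ge> 1" and L: "L \<le> n^2"
  shows "real L * (2^n / real n) \<le> 2 * real n ^ 2 * 4 powr (real L / real n) + real n * 2 ^ (n - 1)"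
proof (cases "2 * L \<le> n^2")
  case True
  have "real L * (2^n / real n) \<le> (real n^2 / 2) * (2^n / real n)"
    using True by (intro mult_right_mono) (simp_all add: of_nat_le_iff flip: of_nat_power)
  also have "\<dots> = real n * 2^(n-1)"
    using n1 by (cases n) (simp_all add: power2_eq_square field_simps)
  finally show ?thesis by (smt (verit) mult_nonneg_nonneg of_nat_0_le_iff powr_ge_zero zero_le_power)
next
  case False
  then have "real n ^ 2 < 2 * real L" by (metis of_nat_less_iff of_nat_mult of_nat_numeral of_nat_power not_le)
  then have "real n < 2 * (real L / real n)" using n1 by (simp add: power2_eq_square field_simps)
  then have "(2::real) powr real n \<le> 2 powr (2 * (real L / real n))" by simp
  also have "\<dots> = (2 powr 2) powr (real L / real n)" by (rule powr_powr[symmetric])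
  also have "(2::real) powr 2 = 4" by simp
  finally have p: "(2::real)^n \<le> 4 powr (real L / real n)" by (simp add: powr_realpow)
  have Ln: "real L / real n \<le> 2 * real n ^ 2"
  proof -
    have "real L \<le> real n ^ 2" using L by (metis of_nat_le_iff of_nat_power)
    also have "\<dots> \<le> 2 * real n^2 * real n" using n1 by simp
    finally show ?thesis using n1 by (simp add: field_simps)
  qed
  have "real L * (2^n / real n) = (real L / real n) * 2^n" by simp
  also have "\<dots> \<le> 2 * real n ^ 2 * 4 powr (real L / real n)"
    using Ln p by (intro mult_mono) auto
  finally have "real L * (2^n / real n) \<le> 2 * real n ^ 2 * 4 powr (real L / real n)" .
  moreover have "0 \<le> real n * 2 ^ (n - 1)" by simp
  ultimately show ?thesis by linarith
qed

theorem mainTheorem2: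
  shows "\<exists>c::real. \<forall>n L::nat. 1 \<le> n \<longrightarrow> L \<le> n^2 \<longrightarrow>
           log 2 (real (N_ops n L))
             \<le> 2 * real n ^ 2 * 4 powr (real L / real n) + real n * 2 ^ (n - 1)
                + c * real n ^ 2 * log 2 (real n)"
proof (intro exI allI impI)
  fix n L :: nat
  assume n1: "1 \<le> n" and L: "L \<le> n^2"
  have rhs0: "0 \<le> 2 * real n ^ 2 * 4 powr (real L / real n) + real n * 2 ^ (n - 1)" by simp
  show "log 2 (real (N_ops n L))
             \<le> 2 * real n ^ 2 * 4 powr (real L / real n) + real n * 2 ^ (n - 1)
                + 16 * real n ^ 2 * log 2 (real n)"
  proof (cases "N_ops n L = 0")
    case True
    have "0 \<le> log 2 (real n)" using n1 by simp
    then have "0 \<le> 16 * real n ^ 2 * log 2 (real n)" by simp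
    moreover have "log 2 (real (N_ops n L)) = 0" using True by (simp add: log_def)
    ultimately show ?thesis using rhs0 by linarith
  next
    case Npos: False
    show ?thesis
    proof (cases "n = 1")
      case True
      have "log 2 (real (N_ops n L)) \<le> log 2 4"
        using N1[of L] Npos True by (subst log_le_cancel_iff) auto
      also have "\<dots> = 2"
      proof -
        have "log 2 ((2::real) powr 2) = 2" by (rule log_powr_cancel) auto
        then show ?thesis by simp
      qed
      also have "\<dots> \<le> 2 * real n ^ 2 * 4 powr (real L / real n) + real n * 2 ^ (n - 1)"
      proof -
        have "1 \<le> (4::real) powr (real L / real n)" by (rule ge_one_powr_ge_zero) auto
        then show ?thesis using True by simp
      qed
      finally show ?thesis using True by simp
    next
      case False
      then have n2: "n \<ge> 2" using n1 by simp
      define M where "M = n + 2 + L"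
      define a where "a = (2::real)^n / real n"
      define l where "l = log 2 (real n)"
      have l1: "l \<ge> 1" unfolding l_def using n2 by simp
      have n4: "real n ^ 4 > 0" using n1 by simp
      have log4: "log 2 (real n ^ 4) = 4 * l" unfolding l_def using n1 by (simp add: log_nat_power)
      have Mle: "real M \<le> real n ^ 4"
      proof -
        have a: "n \<le> n^2" by (simp add: power2_eq_square)
        have b: "2^2 \<le> n^2" using n2 by (intro power_mono) auto
        have "M \<le> 4 * n^2" unfolding M_def using L a b by simp
        also have "4 * n^2 \<le> n^2 * n^2" using b by (intro mult_right_mono) auto
        also have "\<dots> = n^4" by (simp flip: power_add)
        finally show ?thesis by (metis of_nat_le_iff of_nat_power)
      qed
      have L1le: "real L + 1 \<le> real n ^ 4"
        using Mle unfolding M_def by simp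
      have lM: "log 2 (real M) \<le> 4 * l"
        using Mle n4 unfolding log4[symmetric] M_def by (subst log_le_cancel_iff) auto
      have lL: "log 2 (real L + 1) \<le> 4 * l"
        using L1le n4 unfolding log4[symmetric] by (subst log_le_cancel_iff) auto
      have Mpos: "real M > 0" unfolding M_def by simp
      have "log 2 (real (N_ops n L)) \<le> log 2 (real M ^ n * ((real L + 1)^(L+1) * (real M * 2 powr a)^L))"
        using N_bound[OF n1, of L] Npos Mpos unfolding M_def a_def
        by (subst log_le_cancel_iff) auto
      also have "\<dots> = real n * log 2 (real M) + (real L + 1) * log 2 (real L + 1) + real L * (log 2 (real M) + a)"
      proof -
        have Y: "log 2 (real M * 2 powr a) = log 2 (real M) + a"
          using Mpos by (simp add: log_mult)
        have p1: "real M ^ n > 0" "(real L + 1)^(L+1) > 0" "(real M * 2 powr a)^L > 0" using Mpos by (auto simp: M_def)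
        have "log 2 (real M ^ n * ((real L + 1)^(L+1) * (real M * 2 powr a)^L))
            = log 2 (real M ^ n) + (log 2 ((real L + 1)^(L+1)) + log 2 ((real M * 2 powr a)^L))"
        proof -
          have q: "real M ^ n \<noteq> 0" "(real L + 1)^(L+1) * (real M * 2 powr a)^L \<noteq> 0"
            "(real L + 1)^(L+1) \<noteq> 0" "(real M * 2 powr a)^L \<noteq> 0" by (simp_all add: M_def)
          show ?thesis unfolding log_mult[of 2 "real M ^ n"] log_mult[of 2 "(real L + 1)^(L+1)"] using q by simp
        qed
        also have "\<dots> = real n * log 2 (real M) + ((real (L+1)) * log 2 (real L + 1) + real L * log 2 (real M * 2 powr a))"
        proof -
          have r1: "log 2 ((real L+1)^(L+1)) = real (L+1) * log 2 (real L+1)" by (rule log_nat_power) simp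
          have r2: "log 2 (real M ^ n) = real n * log 2 (real M)" by (rule log_nat_power) simp
          have r3: "log 2 ((real M * 2 powr a)^L) = real L * log 2 (real M * 2 powr a)" by (rule log_nat_power) simp
          show ?thesis unfolding r1 r2 r3 ..
        qed
        finally show ?thesis unfolding Y by simp
      qed
      also have "\<dots> \<le> real n * (4 * l) + (real L + 1) * (4 * l) + real L * (4 * l) + real L * a"
      proof -
        have "real n * log 2 (real M) \<le> real n * (4 * l)" by (rule mult_left_mono[OF lM]) simp
        moreover have "(real L + 1) * log 2 (real L + 1) \<le> (real L + 1) * (4 * l)" by (rule mult_left_mono[OF lL]) simp
        moreover have "real L * log 2 (real M) \<le> real L * (4 * l)" by (rule mult_left_mono[OF lM]) simp
        ultimately show ?thesis by (simp add: algebra_simps)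
      qed
      also have "\<dots> = (real n + 2 * real L + 1) * (4 * l) + real L * a" by (simp add: algebra_simps)
      also have "\<dots> \<le> (4 * real n ^ 2) * (4 * l) + real L * a"
      proof -
        have a: "n \<le> n^2" by (simp add: power2_eq_square)
        have b: "1 \<le> n^2" using n1 by simp
        have "n + 2 * L + 1 \<le> 4 * n ^ 2" using a b L by simp
        then have "real (n + 2 * L + 1) \<le> real (4 * n ^ 2)" by (simp only: of_nat_le_iff)
        then have "real n + 2 * real L + 1 \<le> 4 * real n ^ 2" by simp
        then show ?thesis using l1 by (intro add_right_mono mult_right_mono) auto
      qed
      also have "\<dots> \<le> 16 * real n ^ 2 * l + (2 * real n ^ 2 * 4 powr (real L / real n) + real n * 2 ^ (n - 1))"
        using La_bound[OF n1 L] unfolding a_def by simp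
      finally show ?thesis unfolding l_def by simp
    qed
  qed
qed

end
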